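(* Let $n\ge 1$. The path $P_n$ is pseudo-Gorenstein$^{*}$ if and only if $n\equiv 0,2,9,11 \pmod{12}$.
   Context: For a finite simple graph $G$ on vertex set $[N]$, let $S=K[x_1,\dots,x_N]$ ($K$ a field) and $I(G)$ the edge ideal generated by $x_ix_j$, $\{i,j\}\in E(G)$. Let $\alpha(G)$ be the independence number (equal to $\dim S/I(G)$). Write the Hilbert series of $S/I(G)$ uniquely as $(h_0+\dots+h_st^s)/(1-t)^{\alpha(G)}$ with $h_s\ne 0$; the numerator is the $h$-polynomial $h_G(t)$, and $\mathfrak a(G)=s-\alpha(G)$. $G$ is pseudo-Gorenstein$^{*}$ if $h_s=1$ and $\mathfrak a(G)=0$. $P_n$ denotes the path on $n$ vertices. *)

theory Defs
  imports "HOL-Computational_Algebra.Polynomial" "HOL-Computational_Algebra.Formal_Power_Series"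
    "HOL-Computational_Algebra.Polynomial_FPS"
begin

text \<open>A finite simple graph on vertex set [N] = {1..N} is given by N and a
 symmetric irreflexive edge relation E (only pairs inside {1..N} matter).\<close>

definition independent_set :: "nat \<Rightarrow> (nat \<Rightarrow> nat \<Rightarrow> bool) \<Rightarrow> nat set \<Rightarrow> bool" where
  "independent_set N E F \<longleftrightarrow> F \<subseteq> {1..N} \<and> (\<forall>i\<in>F. \<forall>j\<in>F. \<not> E i j)"

definition independence_number :: "nat \<Rightarrow> (nat \<Rightarrow> nat \<Rightarrow> bool) \<Rightarrow> nat" where
  "independence_number N E = Max (card ` {F. independent_set N E F})"

text \<open>Monomials x^m of S = K[x_1..x_N] are exponent vectors m supported in {1..N}.
 The monomials not in the monomial ideal I(G) (i.e. not divisible by any x_i x_j with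
 {i,j} an edge) form a K-basis of S/I(G); the Hilbert function counts those of degree d.\<close>

definition standard_monomials :: "nat \<Rightarrow> (nat \<Rightarrow> nat \<Rightarrow> bool) \<Rightarrow> nat \<Rightarrow> (nat \<Rightarrow> nat) set" where
  "standard_monomials N E d =
     {m. (\<forall>i. i \<notin> {1..N} \<longrightarrow> m i = 0) \<and> sum m {1..N} = d \<and>
         \<not> (\<exists>i\<in>{1..N}. \<exists>j\<in>{1..N}. E i j \<and> m i > 0 \<and> m j > 0)}"

definition hilbert_function :: "nat \<Rightarrow> (nat \<Rightarrow> nat \<Rightarrow> bool) \<Rightarrow> nat \<Rightarrow> nat" where
  "hilbert_function N E d = card (standard_monomials N E d)"

definition hilbert_series :: "nat \<Rightarrow> (nat \<Rightarrow> nat \<Rightarrow> bool) \<Rightarrow> int fps" where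
  "hilbert_series N E = Abs_fps (\<lambda>d. int (hilbert_function N E d))"

definition is_h_polynomial :: "nat \<Rightarrow> (nat \<Rightarrow> nat \<Rightarrow> bool) \<Rightarrow> int poly \<Rightarrow> bool" where
  "is_h_polynomial N E h \<longleftrightarrow>
     fps_of_poly h = hilbert_series N E * (1 - fps_X) ^ independence_number N E"

text \<open>pseudo-Gorenstein*: h_s = 1 and a(G) = s - alpha(G) = 0, where s = deg h.\<close>
definition pseudo_gorenstein_star :: "nat \<Rightarrow> (nat \<Rightarrow> nat \<Rightarrow> bool) \<Rightarrow> bool" where
  "pseudo_gorenstein_star N E \<longleftrightarrow>
     (\<exists>h. is_h_polynomial N E h \<and> lead_coeff h = 1 \<and> degree h = independence_number N E)"

definition path_edge :: "nat \<Rightarrow> nat \<Rightarrow> bool" where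
  "path_edge i j \<longleftrightarrow> j = i + 1 \<or> i = j + 1"

end

theory Submission
  imports Defs
begin

abbreviation "std n d \<equiv> standard_monomials n path_edge d"

lemma std_mem: "m \<in> std n d \<longleftrightarrow> (\<forall>i. i \<notin> {1..n} \<longrightarrow> m i = 0) \<and> sum m {1..n} = d \<and>
   (\<forall>i\<in>{1..n}. \<forall>j\<in>{1..n}. path_edge i j \<longrightarrow> m i = 0 \<or> m j = 0)"
  unfolding standard_monomials_def by auto

lemma std_finite: "finite (std n d)"
proof -
  have "std n d \<subseteq> {f. \<forall>x. (x \<in> {1..n} \<longrightarrow> f x \<in> {0..d}) \<and> (x \<notin> {1..n} \<longrightarrow> f x = 0)}"
  proof (intro subsetI CollectI allI conjI impI)
    fix m x assume m: "m \<in> std n d"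
    hence sup: "\<forall>i. i \<notin> {1..n} \<longrightarrow> m i = 0" and s: "sum m {1..n} = d" by (auto simp: std_mem)
    { assume "x \<in> {1..n}"
      then show "m x \<in> {0..d}" using member_le_sum[of x "{1..n}" m] s by simp }
    { assume "x \<notin> {1..n}" then show "m x = 0" using sup by blast }
  qed
  moreover have "finite {f. \<forall>x. (x \<in> {1..n} \<longrightarrow> f x \<in> {0..d}) \<and> (x \<notin> {1..n} \<longrightarrow> f x = (0::nat))}"
    by (rule finite_set_of_finite_funs) auto
  ultimately show ?thesis using finite_subset by blast
qed

lemma sum_Suc_split: "sum (m::nat\<Rightarrow>nat) {1..Suc k} = sum m {1..k} + m (Suc k)"
  by simp

lemma std_sub: "{m \<in> std (Suc k) d. m (Suc k) = 0} = std k d"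
proof (intro set_eqI iffI)
  fix m assume "m \<in> {m \<in> std (Suc k) d. m (Suc k) = 0}"
  hence A: "\<forall>i. i \<notin> {1..Suc k} \<longrightarrow> m i = 0" "sum m {1..Suc k} = d"
    "\<forall>i\<in>{1..Suc k}. \<forall>j\<in>{1..Suc k}. path_edge i j \<longrightarrow> m i = 0 \<or> m j = 0"
    "m (Suc k) = 0" by (auto simp: std_mem)
  have "\<forall>i. i \<notin> {1..k} \<longrightarrow> m i = 0"
  proof (intro allI impI)
    fix i assume "i \<notin> {1..k}"
    then show "m i = 0" using A(1,4) by (cases "i = Suc k") auto
  qed
  moreover have "sum m {1..k} = d" using A(2,4) sum_Suc_split[of m k] by simp
  moreover have "\<forall>i\<in>{1..k}. \<forall>j\<in>{1..k}. path_edge i j \<longrightarrow> m i = 0 \<or> m j = 0"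
    using A(3) by auto
  ultimately show "m \<in> std k d" by (simp add: std_mem)
next
  fix m assume "m \<in> std k d"
  hence A: "\<forall>i. i \<notin> {1..k} \<longrightarrow> m i = 0" "sum m {1..k} = d"
    "\<forall>i\<in>{1..k}. \<forall>j\<in>{1..k}. path_edge i j \<longrightarrow> m i = 0 \<or> m j = 0"
    by (auto simp: std_mem)
  have z: "m (Suc k) = 0" using A(1) by auto
  have "\<forall>i. i \<notin> {1..Suc k} \<longrightarrow> m i = 0" using A(1) by auto
  moreover have "sum m {1..Suc k} = d" using A(2) z sum_Suc_split[of m k] by simp
  moreover have "\<forall>i\<in>{1..Suc k}. \<forall>j\<in>{1..Suc k}. path_edge i j \<longrightarrow> m i = 0 \<or> m j = 0"
  proof (intro ballI impI)
    fix i j assume ij: "i \<in> {1..Suc k}" "j \<in> {1..Suc k}" "path_edge i j"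
    show "m i = 0 \<or> m j = 0"
    proof (cases "i = Suc k \<or> j = Suc k")
      case True then show ?thesis using z by auto
    next
      case False then show ?thesis using ij A(3) by auto
    qed
  qed
  ultimately show "m \<in> {m \<in> std (Suc k) d. m (Suc k) = 0}" using z by (simp add: std_mem)
qed

definition BB :: "nat \<Rightarrow> nat \<Rightarrow> nat" where
  "BB n d = card {m \<in> std n d. 0 < m n}"

lemma hf_split: "hilbert_function (Suc k) path_edge d = hilbert_function k path_edge d + BB (Suc k) d"
proof -
  have "std (Suc k) d = {m \<in> std (Suc k) d. m (Suc k) = 0} \<union> {m \<in> std (Suc k) d. 0 < m (Suc k)}"
    by auto
  moreover have "card ({m \<in> std (Suc k) d. m (Suc k) = 0} \<union> {m \<in> std (Suc k) d. 0 < m (Suc k)})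
     = card {m \<in> std (Suc k) d. m (Suc k) = 0} + card {m \<in> std (Suc k) d. 0 < m (Suc k)}"
    by (rule card_Un_disjoint) (auto intro: finite_subset[OF _ std_finite])
  ultimately show ?thesis unfolding hilbert_function_def BB_def std_sub by simp
qed

lemma BB_0: "BB (Suc k) 0 = 0"
proof -
  have "{m \<in> std (Suc k) 0. 0 < m (Suc k)} = {}"
  proof (rule ccontr)
    assume "{m \<in> std (Suc k) 0. 0 < m (Suc k)} \<noteq> {}"
    then obtain m where "m \<in> std (Suc k) 0" "0 < m (Suc k)" by auto
    hence "sum m {1..Suc k} = 0" "0 < m (Suc k)" by (auto simp: std_mem)
    thus False using sum_Suc_split[of m k] by simp
  qed
  thus ?thesis unfolding BB_def by (metis card.empty)
qed

lemma sum_upd: "sum (m(Suc k := v)) {1..Suc k} = sum m {1..k} + (v::nat)"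
proof -
  have "sum (m(Suc k := v)) {1..k} = sum m {1..k}" by (rule sum.cong) auto
  thus ?thesis using sum_Suc_split[of "m(Suc k := v)" k] by simp
qed

lemma BB_Suc: "BB (Suc k) (Suc d) = card {m \<in> std (Suc k) d. m k = 0}"
proof -
  let ?n = "Suc k"
  let ?f = "\<lambda>m. m(?n := m ?n - 1)"
  let ?g = "\<lambda>m. m(?n := m ?n + 1)"
  have "bij_betw ?f {m \<in> std ?n (Suc d). 0 < m ?n} {m \<in> std ?n d. m k = 0}"
  proof (rule bij_betw_byWitness[where f'="?g"])
    show "\<forall>a\<in>{m \<in> std ?n (Suc d). 0 < m ?n}. ?g (?f a) = a" by auto
    show "\<forall>a\<in>{m \<in> std ?n d. m k = 0}. ?f (?g a) = a" by auto
    show "?f ` {m \<in> std ?n (Suc d). 0 < m ?n} \<subseteq> {m \<in> std ?n d. m k = 0}"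
    proof
      fix m' assume "m' \<in> ?f ` {m \<in> std ?n (Suc d). 0 < m ?n}"
      then obtain m where m': "m' = ?f m" and m: "m \<in> std ?n (Suc d)" "0 < m ?n" by auto
      hence A: "\<forall>i. i \<notin> {1..?n} \<longrightarrow> m i = 0" "sum m {1..?n} = Suc d"
        "\<forall>i\<in>{1..?n}. \<forall>j\<in>{1..?n}. path_edge i j \<longrightarrow> m i = 0 \<or> m j = 0"
        by (auto simp: std_mem)
      have mk: "m k = 0"
      proof (cases "k = 0")
        case True thus ?thesis using A(1) by auto
      next
        case False
        hence "k \<in> {1..?n}" "?n \<in> {1..?n}" "path_edge k ?n" by (auto simp: path_edge_def)
        thus ?thesis using A(3) m(2) by fastforce
      qed
      have "\<forall>i. i \<notin> {1..?n} \<longrightarrow> m' i = 0" using A(1) m' by auto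
      moreover have "sum m' {1..?n} = d" using A(2) m(2) sum_Suc_split[of m k] sum_upd[of m k "m ?n - 1"] m' by simp
      moreover have "\<forall>i\<in>{1..?n}. \<forall>j\<in>{1..?n}. path_edge i j \<longrightarrow> m' i = 0 \<or> m' j = 0"
      proof (intro ballI impI)
        fix i j assume ij: "i \<in> {1..?n}" "j \<in> {1..?n}" "path_edge i j"
        have le: "m' x \<le> m x" for x using m' by auto
        from A(3) ij have "m i = 0 \<or> m j = 0" by auto
        thus "m' i = 0 \<or> m' j = 0" using le[of i] le[of j] by auto
      qed
      moreover have "m' k = 0" using mk m' by auto
      ultimately show "m' \<in> {m \<in> std ?n d. m k = 0}" by (simp add: std_mem)
    qed
    show "?g ` {m \<in> std ?n d. m k = 0} \<subseteq> {m \<in> std ?n (Suc d). 0 < m ?n}"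
    proof
      fix m' assume "m' \<in> ?g ` {m \<in> std ?n d. m k = 0}"
      then obtain m where m': "m' = ?g m" and m: "m \<in> std ?n d" "m k = 0" by auto
      hence A: "\<forall>i. i \<notin> {1..?n} \<longrightarrow> m i = 0" "sum m {1..?n} = d"
        "\<forall>i\<in>{1..?n}. \<forall>j\<in>{1..?n}. path_edge i j \<longrightarrow> m i = 0 \<or> m j = 0"
        by (auto simp: std_mem)
      have "\<forall>i. i \<notin> {1..?n} \<longrightarrow> m' i = 0" using A(1) m' by auto
      moreover have "sum m' {1..?n} = Suc d" using A(2) sum_Suc_split[of m k] sum_upd[of m k "m ?n + 1"] m' by simp
      moreover have "\<forall>i\<in>{1..?n}. \<forall>j\<in>{1..?n}. path_edge i j \<longrightarrow> m' i = 0 \<or> m' j = 0"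
      proof (intro ballI impI)
        fix i j assume ij: "i \<in> {1..?n}" "j \<in> {1..?n}" "path_edge i j"
        show "m' i = 0 \<or> m' j = 0"
        proof (cases "i = ?n \<or> j = ?n")
          case True
          hence "i = k \<or> j = k" using ij by (auto simp: path_edge_def)
          moreover have "i \<noteq> j" using ij by (auto simp: path_edge_def)
          ultimately show ?thesis using m(2) m' by auto
        next
          case False thus ?thesis using A(3) ij m' by auto
        qed
      qed
      moreover have "0 < m' ?n" using m' by auto
      ultimately show "m' \<in> {m \<in> std ?n (Suc d). 0 < m ?n}" by (simp add: std_mem)
    qed
  qed
  thus ?thesis unfolding BB_def by (rule bij_betw_same_card)
qed

lemma split2: "card {m \<in> std (Suc k) d. m k = 0} = BB (Suc k) d + hilbert_function (k - 1) path_edge d"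
proof -
  let ?n = "Suc k"
  have pos: "m k = 0" if "m \<in> std ?n d" "0 < m ?n" for m
  proof (cases "k = 0")
    case True thus ?thesis using that by (auto simp: std_mem)
  next
    case False
    hence "k \<in> {1..?n}" "?n \<in> {1..?n}" "path_edge k ?n" by (auto simp: path_edge_def)
    thus ?thesis using that by (fastforce simp: std_mem)
  qed
  have e1: "{m \<in> std ?n d. m k = 0} = {m \<in> std ?n d. m k = 0 \<and> m ?n = 0} \<union> {m \<in> std ?n d. 0 < m ?n}"
    using pos by auto
  have e2: "{m \<in> std ?n d. m k = 0 \<and> m ?n = 0} = std (k - 1) d"
  proof (cases k)
    case 0
    have "{m \<in> std ?n d. m k = 0 \<and> m ?n = 0} = {m \<in> std ?n d. m ?n = 0}"
      using 0 by (auto simp: std_mem)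
    thus ?thesis using std_sub[of k d] 0 by simp
  next
    case (Suc j)
    have "{m \<in> std ?n d. m k = 0 \<and> m ?n = 0} = {m \<in> std k d. m k = 0}"
      using std_sub[of k d] by auto
    thus ?thesis using std_sub[of j d] Suc by simp
  qed
  have "card ({m \<in> std ?n d. m k = 0 \<and> m ?n = 0} \<union> {m \<in> std ?n d. 0 < m ?n})
     = card {m \<in> std ?n d. m k = 0 \<and> m ?n = 0} + card {m \<in> std ?n d. 0 < m ?n}"
    by (rule card_Un_disjoint) (auto intro: finite_subset[OF _ std_finite])
  thus ?thesis using e1 e2 unfolding BB_def hilbert_function_def by simp
qed

abbreviation "HS n \<equiv> hilbert_series n path_edge"

lemma HS_rec: "(1 - fps_X) * HS (Suc k) = (1 - fps_X) * HS k + fps_X * HS (k - 1)"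
proof -
  define Bf :: "int fps" where "Bf = Abs_fps (\<lambda>d. int (BB (Suc k) d))"
  have h1: "HS (Suc k) = HS k + Bf"
    by (rule fps_ext) (simp add: Bf_def hilbert_series_def hf_split)
  have h2: "Bf = fps_X * Bf + fps_X * HS (k - 1)"
  proof (rule fps_ext)
    fix n show "fps_nth Bf n = fps_nth (fps_X * Bf + fps_X * HS (k - 1)) n"
    proof (cases n)
      case 0 thus ?thesis by (simp add: Bf_def BB_0)
    next
      case (Suc d) thus ?thesis by (simp add: Bf_def hilbert_series_def BB_Suc split2)
    qed
  qed
  have "(1 - fps_X) * Bf = fps_X * HS (k - 1)"
  proof -
    have "(1 - fps_X) * Bf = Bf - fps_X * Bf" by (simp add: algebra_simps)
    also have "\<dots> = fps_X * HS (k - 1)" using h2 by (simp add: algebra_simps)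
    finally show ?thesis .
  qed
  thus ?thesis using h1 by (simp add: algebra_simps)
qed

lemma HS_0: "HS 0 = 1"
proof (rule fps_ext)
  fix d
  have "std 0 d = (if d = 0 then {\<lambda>_. 0} else {})"
    by (auto simp: std_mem)
  thus "fps_nth (HS 0) d = fps_nth 1 d" by (simp add: hilbert_series_def hilbert_function_def)
qed

fun gp :: "nat \<Rightarrow> int poly" where
  "gp 0 = 1"
| "gp (Suc 0) = 1"
| "gp (Suc (Suc k)) = (if even k then gp (Suc k) + pCons 0 (gp k)
      else gp (Suc k) - pCons 0 (gp (Suc k)) + pCons 0 (gp k))"

lemma fps_pCons0: "fps_of_poly (pCons 0 p) = fps_X * fps_of_poly (p :: int poly)"
  by (simp add: fps_of_poly_pCons mult.commute)

lemma HS_gp: "HS n * (1 - fps_X) ^ (Suc n div 2) = fps_of_poly (gp n)"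
proof (induction n rule: gp.induct)
  case 1 thus ?case by (simp add: HS_0)
next
  case 2
  have "(1 - fps_X) * HS (Suc 0) = 1" using HS_rec[of 0] by (simp add: HS_0 algebra_simps)
  thus ?case by (simp add: mult.commute)
next
  case (3 k)
  have R: "(1 - fps_X) * HS (Suc (Suc k)) = (1 - fps_X) * HS (Suc k) + fps_X * HS k"
    using HS_rec[of "Suc k"] by simp
  show ?case
  proof (cases "even k")
    case True
    from True obtain j where k: "k = 2 * j" by auto
    have a1: "Suc (Suc (Suc k)) div 2 = Suc j" "Suc (Suc k) div 2 = Suc j" "Suc k div 2 = j"
      using k by auto
    have "HS (Suc (Suc k)) * (1 - fps_X) ^ Suc j = (1 - fps_X) ^ j * ((1 - fps_X) * HS (Suc (Suc k)))"
      by (simp add: algebra_simps)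
    also have "\<dots> = HS (Suc k) * (1 - fps_X) ^ Suc j + fps_X * (HS k * (1 - fps_X) ^ j)"
      unfolding R by (simp add: algebra_simps)
    also have "\<dots> = fps_of_poly (gp (Suc (Suc k)))"
      using "3.IH" a1 True by (simp add: fps_of_poly_add fps_pCons0)
    finally show ?thesis using a1 by simp
  next
    case False
    then obtain j where k: "k = 2 * j + 1" using oddE by blast
    have a1: "Suc (Suc (Suc k)) div 2 = Suc (Suc j)" "Suc (Suc k) div 2 = Suc j" "Suc k div 2 = Suc j"
      using k by auto
    have "HS (Suc (Suc k)) * (1 - fps_X) ^ Suc (Suc j) = (1 - fps_X) ^ Suc j * ((1 - fps_X) * HS (Suc (Suc k)))"
      by (simp add: algebra_simps)
    also have "\<dots> = (1 - fps_X) * (HS (Suc k) * (1 - fps_X) ^ Suc j) + fps_X * (HS k * (1 - fps_X) ^ Suc j)"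
      unfolding R by (simp add: algebra_simps)
    also have "\<dots> = fps_of_poly (gp (Suc (Suc k)))"
    proof -
      have I1: "HS (Suc k) * (1 - fps_X) ^ Suc j = fps_of_poly (gp (Suc k))"
        using "3.IH" a1 False by auto
      have I2: "HS k * (1 - fps_X) ^ Suc j = fps_of_poly (gp k)"
        using "3.IH" a1 False by auto
      show ?thesis unfolding I1 I2 using False
        by (simp add: fps_of_poly_add fps_of_poly_diff fps_pCons0 algebra_simps)
    qed
    finally show ?thesis using a1 by simp
  qed
qed

fun cc :: "nat \<Rightarrow> int" where
  "cc 0 = 1"
| "cc (Suc 0) = 0"
| "cc (Suc (Suc k)) = (if even k then cc (Suc k) + cc k else cc k - cc (Suc k))"

lemma gp_coeff: "(\<forall>i > Suc n div 2. coeff (gp n) i = 0) \<and> coeff (gp n) (Suc n div 2) = cc n"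
proof (induction n rule: gp.induct)
  case 1 thus ?case by (auto simp: coeff_1)
next
  case 2 thus ?case by (auto simp: coeff_1)
next
  case (3 k)
  show ?case
  proof (cases "even k")
    case True
    have I1: "\<And>i. i > Suc (Suc k) div 2 \<Longrightarrow> coeff (gp (Suc k)) i = 0"
     and I2: "coeff (gp (Suc k)) (Suc (Suc k) div 2) = cc (Suc k)"
     and I3: "\<And>i. i > Suc k div 2 \<Longrightarrow> coeff (gp k) i = 0"
     and I4: "coeff (gp k) (Suc k div 2) = cc k"
      using "3.IH" True by auto
    from True obtain j where k: "k = 2 * j" by auto
    have a1: "Suc (Suc (Suc k)) div 2 = Suc j" "Suc (Suc k) div 2 = Suc j" "Suc k div 2 = j"
      using k by auto
    have "coeff (gp (Suc (Suc k))) i = 0" if gt: "i > Suc j" for i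
    proof -
      obtain i' where i: "i = Suc i'" using gt by (cases i) auto
      show ?thesis using True I1[of i] I3[of i'] gt a1 i by (simp add: coeff_pCons)
    qed
    moreover have "coeff (gp (Suc (Suc k))) (Suc j) = cc (Suc (Suc k))"
      using True I2 I4 a1 by (simp add: coeff_pCons)
    ultimately show ?thesis using a1 by simp
  next
    case False
    have I1: "\<And>i. i > Suc (Suc k) div 2 \<Longrightarrow> coeff (gp (Suc k)) i = 0"
     and I2: "coeff (gp (Suc k)) (Suc (Suc k) div 2) = cc (Suc k)"
     and I3: "\<And>i. i > Suc k div 2 \<Longrightarrow> coeff (gp k) i = 0"
     and I4: "coeff (gp k) (Suc k div 2) = cc k"
      using "3.IH" False by auto
    from False obtain j where k: "k = 2 * j + 1" using oddE by blast
    have a1: "Suc (Suc (Suc k)) div 2 = Suc (Suc j)" "Suc (Suc k) div 2 = Suc j" "Suc k div 2 = Suc j"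
      using k by auto
    have "coeff (gp (Suc (Suc k))) i = 0" if gt: "i > Suc (Suc j)" for i
    proof -
      obtain i' where i: "i = Suc i'" using gt by (cases i) auto
      show ?thesis using False I1[of i] I1[of i'] I3[of i'] gt a1 i by (simp add: coeff_pCons)
    qed
    moreover have "coeff (gp (Suc (Suc k))) (Suc (Suc j)) = cc (Suc (Suc k))"
      using False I1[of "Suc (Suc j)"] I2 I4 a1 by (simp add: coeff_pCons)
    ultimately show ?thesis using a1 by simp
  qed
qed

definition tabL :: "int list" where "tabL = [1,0,1,-1,0,-1,-1,0,-1,1,0,1]"

lemma cases12: "(r::nat) < 12 \<Longrightarrow> r \<in> {0,1,2,3,4,5,6,7,8,9,10,11}"
  by (simp only: insert_iff empty_iff) presburger

lemma cc_tab: "cc n = tabL ! (n mod 12)"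
proof (induction n rule: cc.induct)
  case 1 thus ?case by (simp add: tabL_def)
next
  case 2 thus ?case by (simp add: tabL_def)
next
  case (3 k)
  define r where "r = k mod 12"
  have r: "r < 12" by (simp add: r_def)
  have e: "even k \<longleftrightarrow> even r" unfolding r_def by presburger
  have m1: "Suc k mod 12 = Suc r mod 12" unfolding r_def by (simp add: mod_Suc_eq)
  have m2: "Suc (Suc k) mod 12 = Suc (Suc r) mod 12" unfolding r_def by (metis mod_Suc_eq)
  have T: "tabL ! (Suc (Suc r) mod 12) = (if even r then tabL ! (Suc r mod 12) + tabL ! r
                 else tabL ! r - tabL ! (Suc r mod 12))"
    using cases12[OF r] by (elim insertE emptyE) (simp_all add: tabL_def)
  show ?case using "3.IH" e T m1 m2 by (simp add: r_def)
qed

lemma cc_one: "cc n = 1 \<longleftrightarrow> n mod 12 \<in> {0, 2, 9, 11}"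
proof -
  have r: "n mod 12 < 12" by simp
  show ?thesis unfolding cc_tab
    using cases12[OF r] by (elim insertE emptyE) (simp_all add: tabL_def)
qed

lemma indep_le: "independent_set n path_edge F \<Longrightarrow> card F \<le> Suc n div 2"
proof (induction n arbitrary: F rule: less_induct)
  case (less n)
  have F: "F \<subseteq> {1..n}" "\<forall>i\<in>F. \<forall>j\<in>F. \<not> path_edge i j"
    using less.prems by (auto simp: independent_set_def)
  show ?case
  proof (cases n)
    case 0 thus ?thesis using F by auto
  next
    case (Suc k)
    show ?thesis
    proof (cases "Suc k \<in> F")
      case False
      have "F \<subseteq> {1..k}"
      proof
        fix x assume "x \<in> F"
        hence "x \<in> {1..Suc k}" "x \<noteq> Suc k" using F(1) Suc False by auto
        thus "x \<in> {1..k}" by auto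
      qed
      hence "independent_set k path_edge F" using F by (auto simp: independent_set_def)
      hence "card F \<le> Suc k div 2" using less.IH[of k F] Suc by simp
      thus ?thesis using Suc by simp
    next
      case True
      have kF: "k \<notin> F"
      proof
        assume "k \<in> F"
        moreover have "path_edge k (Suc k)" by (simp add: path_edge_def)
        ultimately show False using F(2) True by blast
      qed
      have "F - {Suc k} \<subseteq> {1..k - 1}"
      proof
        fix x assume "x \<in> F - {Suc k}"
        hence "x \<in> {1..Suc k}" "x \<noteq> Suc k" "x \<noteq> k" using F(1) Suc kF by auto
        thus "x \<in> {1..k - 1}" by auto
      qed
      hence "independent_set (k - 1) path_edge (F - {Suc k})"
        using F by (auto simp: independent_set_def)
      hence c: "card (F - {Suc k}) \<le> Suc (k - 1) div 2" using less.IH[of "k - 1" "F - {Suc k}"] Suc by simp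
      have fin: "finite F" using finite_subset[OF F(1)] by simp
      have "card F = Suc (card (F - {Suc k}))" using card.remove[OF fin True] .
      thus ?thesis using c Suc by (cases k) simp_all
    qed
  qed
qed

lemma indep_num: "independence_number n path_edge = Suc n div 2"
proof -
  let ?S = "card ` {F. independent_set n path_edge F}"
  let ?W = "(\<lambda>j. 2 * j + 1) ` {..< Suc n div 2}"
  have W: "independent_set n path_edge ?W"
    unfolding independent_set_def path_edge_def by (auto; presburger)
  have cW: "card ?W = Suc n div 2"
    by (subst card_image) (auto simp: inj_on_def)
  have fin: "finite ?S"
  proof -
    have "{F. independent_set n path_edge F} \<subseteq> Pow {1..n}" by (auto simp: independent_set_def)
    hence "finite {F. independent_set n path_edge F}" using finite_subset[of _ "Pow {1..n}"] by simp
    thus ?thesis by simp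
  qed
  show ?thesis unfolding independence_number_def
  proof (rule Max_eqI[OF fin])
    show "y \<le> Suc n div 2" if "y \<in> ?S" for y using that indep_le by auto
    show "Suc n div 2 \<in> ?S" using W cW by (metis (mono_tags, lifting) image_eqI mem_Collect_eq)
  qed
qed

theorem theorem2p4:
  fixes n :: nat
  assumes "n \<ge> 1"
  shows "pseudo_gorenstein_star n path_edge \<longleftrightarrow> n mod 12 \<in> {0, 2, 9, 11}"
proof -
  have hp: "is_h_polynomial n path_edge h \<longleftrightarrow> h = gp n" for h
    unfolding is_h_polynomial_def indep_num HS_gp fps_of_poly_eq_iff by simp
  have dle: "degree (gp n) \<le> Suc n div 2" using gp_coeff[of n] by (intro degree_le) auto
  have co: "coeff (gp n) (Suc n div 2) = cc n" using gp_coeff[of n] by auto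
  have "pseudo_gorenstein_star n path_edge \<longleftrightarrow> lead_coeff (gp n) = 1 \<and> degree (gp n) = Suc n div 2"
    unfolding pseudo_gorenstein_star_def hp indep_num by auto
  also have "\<dots> \<longleftrightarrow> cc n = 1"
  proof
    assume "lead_coeff (gp n) = 1 \<and> degree (gp n) = Suc n div 2"
    hence d1: "coeff (gp n) (degree (gp n)) = 1" and d2: "degree (gp n) = Suc n div 2" by auto
    show "cc n = 1" using d1 unfolding d2 co .
  next
    assume c1: "cc n = 1"
    hence "coeff (gp n) (Suc n div 2) \<noteq> 0" using co by simp
    hence "Suc n div 2 \<le> degree (gp n)" by (rule le_degree)
    hence "degree (gp n) = Suc n div 2" using dle by simp
    thus "lead_coeff (gp n) = 1 \<and> degree (gp n) = Suc n div 2" using co c1 by simp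
  qed
  finally show ?thesis using cc_one by simp
qed
end
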